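(* Let $0<\theta<\frac{\pi}{4}$ and let $N\ge 2$ be an integer. Let $|\psi_{\mathrm{GGHZ}}\rangle=\cos\theta|000\rangle+\sin\theta|111\rangle$ and $|\psi_{\mathrm{GHZ}}\rangle=\frac{1}{\sqrt2}(|000\rangle+|111\rangle)$ be three-qubit states on $\mathcal H_A\otimes\mathcal H_B\otimes\mathcal H_C$. For $x\in\{0,1,2\}$ and $a\in\{0,1\}$ let $P_{a|x}$ be the projector onto the eigenvector of $\sigma_x$ (if $x=0$), $\sigma_y$ (if $x=1$), $\sigma_z$ (if $x=2$) with eigenvalue $(-1)^a$. Define the assemblages on Charlie $$\sigma^{\mathrm{GGHZ}}_{a,b|x,y}=\mathrm{Tr}_{AB}\big[(P_{a|x}\otimes P_{b|y}\otimes\mathbb 1)|\psi_{\mathrm{GGHZ}}\rangle\langle\psi_{\mathrm{GGHZ}}|\big],\quad \sigma^{\mathrm{GHZ}}_{a,b|x,y}=\mathrm{Tr}_{AB}\big[(P_{a|x}\otimes P_{b|y}\otimes\mathbb 1)|\psi_{\mathrm{GHZ}}\rangle\langle\psi_{\mathrm{GHZ}}|\big]$$ for $a,b\in\{0,1\}$, $x,y\in\{0,1,2\}$. Let $P_{\mathrm{fail}}=(1-2\sin^2\theta)^{N-1}$, $P_{\mathrm{success}}=1-P_{\mathrm{fail}}$, and $\sigma^{\mathrm{dist}}_{a,b|x,y}=P_{\mathrm{success}}\,\sigma^{\mathrm{GHZ}}_{a,b|x,y}+P_{\mathrm{fail}}\,\sigma^{\mathrm{GGHZ}}_{a,b|x,y}$,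 the assemblage obtained on average from $N$ copies of $\{\sigma^{\mathrm{GGHZ}}_{a,b|x,y}\}$ by the distillation protocol described in the context. Then $$\mathcal F_A\big(\{\sigma^{\mathrm{dist}}_{a,b|x,y}\},\{\sigma^{\mathrm{GHZ}}_{a,b|x,y}\}\big)=\sqrt{1-\tfrac12(1-\sin2\theta)(\cos2\theta)^{N-1}}.$$
   Context: $\sigma_x,\sigma_y,\sigma_z$ are the Pauli matrices in the computational basis. For positive semidefinite $A,B$, $\mathcal F(A,B)=\mathrm{Tr}\big[\sqrt{\sqrt A B\sqrt A}\big]$. For two-sided assemblages $\{\sigma_{a,b|x,y}\}$, $\{\tau_{a,b|x,y}\}$ the assemblage fidelity is $\mathcal F_A=\min_{x,y}\sum_{a,b}\mathcal F(\sigma_{a,b|x,y},\tau_{a,b|x,y})$ (components of zero trace contribute $0$). Distillation protocol (two-sided device-independent setting: Alice and Bob untrusted, Charlie trusted): on each of the first $N-1$ copies Charlie applies the filter with Kraus operators $K_0=\mathrm{diag}(\tan\theta,1)$, $K_1=\mathrm{diag}(\sqrt{1-\tan^2\theta},0)$; outcome $0$ (probability $2\sin^2\theta$ per copy) turns the copy into $\{\sigma^{\mathrm{GHZ}}_{a,b|x,y}\}$; copies with outcome $1$ are discarded and if all fail the untouched $N$-th copy is kept, so the average output is the convex combination $\sigma^{\mathrm{dist}}$ of the claim. *)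

theory Defs
  imports Complex_Main "Jordan_Normal_Form.Matrix"
begin

definition adj :: "complex mat \<Rightarrow> complex mat" where
  "adj A = mat (dim_col A) (dim_row A) (\<lambda>(i,j). cnj (A $$ (j,i)))"

definition mtrace :: "complex mat \<Rightarrow> complex" where
  "mtrace A = (\<Sum>i<dim_row A. A $$ (i,i))"

definition psd :: "complex mat \<Rightarrow> bool" where
  "psd A \<longleftrightarrow> A \<in> carrier_mat (dim_row A) (dim_row A) \<and> adj A = A \<and>
     (\<forall>v \<in> carrier_vec (dim_row A).
        Im (\<Sum>i<dim_row A. cnj (v $ i) * (A *\<^sub>v v) $ i) = 0 \<and>
        Re (\<Sum>i<dim_row A. cnj (v $ i) * (A *\<^sub>v v) $ i) \<ge> 0)"

definition msqrt :: "complex mat \<Rightarrow> complex mat" where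
  "msqrt A = (THE S. psd S \<and> dim_row S = dim_row A \<and> S * S = A)"

definition fidelity :: "complex mat \<Rightarrow> complex mat \<Rightarrow> real" where
  "fidelity A B = Re (mtrace (msqrt (msqrt A * B * msqrt A)))"

definition pauli :: "nat \<Rightarrow> complex mat" where
  "pauli x = (if x = 0 then mat_of_rows_list 2 [[0, 1], [1, 0]]
              else if x = 1 then mat_of_rows_list 2 [[0, -\<i>], [\<i>, 0]]
              else mat_of_rows_list 2 [[1, 0], [0, -1]])"

definition proj :: "nat \<Rightarrow> nat \<Rightarrow> complex mat" where
  "proj a x = (let v = (SOME v. v \<in> carrier_vec 2 \<and> (\<Sum>i<2. cmod (v $ i) ^ 2) = 1 \<and>
                                pauli x *\<^sub>v v = ((-1) ^ a) \<cdot>\<^sub>v v)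
               in mat 2 2 (\<lambda>(i,j). v $ i * cnj (v $ j)))"

type_synonym ket3 = "nat \<Rightarrow> nat \<Rightarrow> nat \<Rightarrow> complex"
type_synonym op3 = "nat \<Rightarrow> nat \<Rightarrow> nat \<Rightarrow> nat \<Rightarrow> nat \<Rightarrow> nat \<Rightarrow> complex"
  \<comment> \<open>matrix entry <i j k| O |i' j' k'> written O i j k i' j' k'\<close>

definition ket_gghz :: "real \<Rightarrow> ket3" where
  "ket_gghz \<theta> i j k = (if i = 0 \<and> j = 0 \<and> k = 0 then complex_of_real (cos \<theta>)
                       else if i = 1 \<and> j = 1 \<and> k = 1 then complex_of_real (sin \<theta>) else 0)"

definition ket_ghz :: "ket3" where
  "ket_ghz i j k = (if (i = 0 \<and> j = 0 \<and> k = 0) \<or> (i = 1 \<and> j = 1 \<and> k = 1)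
                    then complex_of_real (1 / sqrt 2) else 0)"

definition dens3 :: "ket3 \<Rightarrow> op3" where
  "dens3 \<psi> i j k i' j' k' = \<psi> i j k * cnj (\<psi> i' j' k')"

definition tensor3 :: "complex mat \<Rightarrow> complex mat \<Rightarrow> complex mat \<Rightarrow> op3" where
  "tensor3 P Q R i j k i' j' k' = P $$ (i,i') * Q $$ (j,j') * R $$ (k,k')"

definition mult3 :: "op3 \<Rightarrow> op3 \<Rightarrow> op3" where
  "mult3 M1 M2 i j k i' j' k' =
     (\<Sum>p<2. \<Sum>q<2. \<Sum>r<2. M1 i j k p q r * M2 p q r i' j' k')"

definition ptrace_AB :: "op3 \<Rightarrow> complex mat" where
  "ptrace_AB M = mat 2 2 (\<lambda>(k,l). \<Sum>i<2. \<Sum>j<2. M i j k i j l)"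

definition assemblage :: "ket3 \<Rightarrow> nat \<Rightarrow> nat \<Rightarrow> nat \<Rightarrow> nat \<Rightarrow> complex mat" where
  "assemblage \<psi> a b x y =
     ptrace_AB (mult3 (tensor3 (proj a x) (proj b y) (1\<^sub>m 2)) (dens3 \<psi>))"

definition comp_fid :: "complex mat \<Rightarrow> complex mat \<Rightarrow> real" where
  "comp_fid A B = (if mtrace A = 0 \<or> mtrace B = 0 then 0 else fidelity A B)"

definition assemblage_fidelity ::
  "(nat \<Rightarrow> nat \<Rightarrow> nat \<Rightarrow> nat \<Rightarrow> complex mat) \<Rightarrow> (nat \<Rightarrow> nat \<Rightarrow> nat \<Rightarrow> nat \<Rightarrow> complex mat) \<Rightarrow> real" where
  "assemblage_fidelity \<sigma> \<tau> =
     Min ((\<lambda>(x,y). \<Sum>a<2. \<Sum>b<2. comp_fid (\<sigma> a b x y) (\<tau> a b x y)) ` ({..<3} \<times> {..<3}))"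

definition P_fail :: "real \<Rightarrow> nat \<Rightarrow> real" where
  "P_fail \<theta> N = (1 - 2 * (sin \<theta>)\<^sup>2) ^ (N - 1)"

definition P_success :: "real \<Rightarrow> nat \<Rightarrow> real" where
  "P_success \<theta> N = 1 - P_fail \<theta> N"

definition sigma_dist :: "real \<Rightarrow> nat \<Rightarrow> nat \<Rightarrow> nat \<Rightarrow> nat \<Rightarrow> nat \<Rightarrow> complex mat" where
  "sigma_dist \<theta> N a b x y =
     complex_of_real (P_success \<theta> N) \<cdot>\<^sub>m assemblage ket_ghz a b x y
     + complex_of_real (P_fail \<theta> N) \<cdot>\<^sub>m assemblage (ket_gghz \<theta>) a b x y"

end

theory Submission
  imports Defs
begin


definition gm :: "complex \<Rightarrow> complex \<Rightarrow> complex \<Rightarrow> complex \<Rightarrow> complex mat" where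
  "gm p q r s = mat 2 2 (\<lambda>(i,j). if i = 0 then (if j = 0 then p else q) else (if j = 0 then r else s))"

lemma less2: "(i::nat) < 2 \<longleftrightarrow> i = 0 \<or> i = 1" by auto

lemma gm_dim[simp]: "dim_row (gm p q r s) = 2" "dim_col (gm p q r s) = 2" "gm p q r s \<in> carrier_mat 2 2"
  by (auto simp: gm_def)

lemma gm_idx[simp]: "gm p q r s $$ (0,0) = p" "gm p q r s $$ (0,1) = q" "gm p q r s $$ (1,0) = r" "gm p q r s $$ (1,1) = s"
  by (auto simp: gm_def)

lemma gm_idx'[simp]: "gm p q r s $$ (0,Suc 0) = q" "gm p q r s $$ (Suc 0,0) = r" "gm p q r s $$ (Suc 0,Suc 0) = s"
  by (auto simp: gm_def)

lemma mat2_gm: "A \<in> carrier_mat 2 2 \<Longrightarrow> A = gm (A$$(0,0)) (A$$(0,1)) (A$$(1,0)) (A$$(1,1))"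
  by (rule eq_matI) (auto simp: gm_def less2)

lemma gm_eq_iff: "gm p q r s = gm p' q' r' s' \<longleftrightarrow> p = p' \<and> q = q' \<and> r = r' \<and> s = s'"
  by (metis gm_idx)

lemma sum2: "(\<Sum>i<2. f i) = f 0 + f (1::nat)"
  by (simp add: numeral_2_eq_2)

lemma sum2': "(\<Sum>i\<in>{0..<2}. f i) = f 0 + f (1::nat)"
  by (simp add: numeral_2_eq_2)

lemma gm_mult: "gm p q r s * gm p' q' r' s' = gm (p*p'+q*r') (p*q'+q*s') (r*p'+s*r') (r*q'+s*s')"
  by (rule eq_matI) (auto simp: less2 scalar_prod_def sum2' row_def col_def)

lemma gm_add: "gm p q r s + gm p' q' r' s' = gm (p+p') (q+q') (r+r') (s+s')"
  by (rule eq_matI) (auto simp: less2)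

lemma gm_smult: "c \<cdot>\<^sub>m gm p q r s = gm (c*p) (c*q) (c*r) (c*s)"
  by (rule eq_matI) (auto simp: less2)

lemma gm_trace: "mtrace (gm p q r s) = p + s"
  by (simp add: mtrace_def sum2)

lemma gm_adj: "adj (gm p q r s) = gm (cnj p) (cnj r) (cnj q) (cnj s)"
  by (rule eq_matI) (auto simp: adj_def less2)

lemma gm_mult_vec: "v \<in> carrier_vec 2 \<Longrightarrow> (gm p q r s *\<^sub>v v) $ 0 = p * v$0 + q * v$1"
   "v \<in> carrier_vec 2 \<Longrightarrow> (gm p q r s *\<^sub>v v) $ 1 = r * v$0 + s * v$1"
  by (auto simp: scalar_prod_def sum2' row_def)




definition Qf :: "real \<Rightarrow> real \<Rightarrow> complex \<Rightarrow> complex \<Rightarrow> complex \<Rightarrow> real" where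
  "Qf a d q x y = a * (cmod x)^2 + d * (cmod y)^2 + 2 * Re (cnj x * q * y)"

lemma qf_expand: "cnj x * (complex_of_real a * x + q * y) + cnj y * (cnj q * x + complex_of_real d * y)
   = complex_of_real (Qf a d q x y)"
  by (simp add: Qf_def complex_eq_iff cmod_power2) (simp add: algebra_simps power2_eq_square)


lemma Qf_nonneg: assumes "0 \<le> a" "0 \<le> d" "(cmod q)^2 \<le> a * d" shows "0 \<le> Qf a d q x y"
proof -
  have h1: "cmod q \<le> sqrt (a*d)" using assms by (simp add: real_le_rsqrt)
  have "- Re (cnj x * q * y) \<le> cmod (cnj x * q * y)"
    by (metis abs_Re_le_cmod abs_le_iff)
  also have "\<dots> = cmod x * cmod q * cmod y" by (simp add: norm_mult)
  also have "\<dots> \<le> cmod x * sqrt (a*d) * cmod y"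
    by (intro mult_right_mono mult_left_mono h1) auto
  also have "\<dots> = (sqrt a * cmod x) * (sqrt d * cmod y)" by (simp add: real_sqrt_mult)
  also have "\<dots> \<le> ((sqrt a * cmod x)^2 + (sqrt d * cmod y)^2)/2"
    using sum_squares_bound[of "sqrt a * cmod x" "sqrt d * cmod y"] by (simp add: power2_eq_square algebra_simps)
  also have "\<dots> = (a * (cmod x)^2 + d * (cmod y)^2)/2"
    using assms by (simp add: power_mult_distrib)
  finally show ?thesis unfolding Qf_def by (simp add: field_simps)
qed


lemma qf_vec: "v \<in> carrier_vec 2 \<Longrightarrow> (\<Sum>i<dim_row (gm p q r s). cnj (v $ i) * (gm p q r s *\<^sub>v v) $ i)
   = cnj (v$0) * (p * v$0 + q * v$1) + cnj (v$1) * (r * v$0 + s * v$1)"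
  by (simp add: sum2 scalar_prod_def sum2' row_def)

definition v2 :: "complex \<Rightarrow> complex \<Rightarrow> complex vec" where "v2 x y = vec 2 (\<lambda>i. if i = 0 then x else y)"
lemma v2[simp]: "v2 x y \<in> carrier_vec 2" "v2 x y $ 0 = x" "v2 x y $ 1 = y" "v2 x y $ Suc 0 = y"
  by (auto simp: v2_def)


lemma psd_gm: "psd (gm p q r s) \<longleftrightarrow> r = cnj q \<and> Im p = 0 \<and> Im s = 0 \<and> 0 \<le> Re p \<and> 0 \<le> Re s
   \<and> (cmod q)^2 \<le> Re p * Re s" (is "?L \<longleftrightarrow> ?R")
proof
  assume L: ?L
  hence h: "adj (gm p q r s) = gm p q r s" by (simp add: psd_def)
  hence h1: "cnj p = p" "cnj r = q" "cnj s = s" by (simp_all add: gm_adj gm_eq_iff)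
  have r: "r = cnj q" using h1(2) by auto
  have ip: "Im p = 0" using h1(1) by (simp add: complex_eq_iff)
  have ims: "Im s = 0" using h1(3) by (simp add: complex_eq_iff)
  define a where "a = Re p" define d where "d = Re s"
  have p: "p = complex_of_real a" using ip by (simp add: a_def complex_eq_iff)
  have s: "s = complex_of_real d" using ims by (simp add: d_def complex_eq_iff)
  have Q: "0 \<le> Qf a d q x y" for x y
  proof -
    have "0 \<le> Re (\<Sum>i<dim_row (gm p q r s). cnj (v2 x y $ i) * (gm p q r s *\<^sub>v v2 x y) $ i)"
      using L unfolding psd_def by auto
    moreover have "(\<Sum>i<dim_row (gm p q r s). cnj (v2 x y $ i) * (gm p q r s *\<^sub>v v2 x y) $ i) = complex_of_real (Qf a d q x y)"
      unfolding qf_vec[OF v2(1)] v2 p s r by (rule qf_expand)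
    ultimately show ?thesis by (metis Re_complex_of_real)
  qed
  have a0: "0 \<le> a" using Q[of 1 0] by (simp add: Qf_def)
  have d0: "0 \<le> d" using Q[of 0 1] by (simp add: Qf_def)
  have det: "(cmod q)^2 \<le> a * d"
  proof (cases "a = 0")
    case False
    hence "a > 0" using a0 by simp
    have "0 \<le> Qf a d q (-q) (complex_of_real a)" by (rule Q)
    also have "Qf a d q (-q) (complex_of_real a) = a * (a * d - (cmod q)^2)"
      by (simp add: Qf_def cmod_power2) (simp add: power2_eq_square algebra_simps)
    finally show ?thesis using \<open>a > 0\<close> by (simp add: zero_le_mult_iff)
  next
    case True
    define t where "t = 1 / (d+1)"
    have t: "t > 0" using d0 by (simp add: t_def)
    have "0 \<le> Qf a d q 1 (- cnj q * complex_of_real t)" by (rule Q)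
    also have "Qf a d q 1 (- cnj q * complex_of_real t) = (cmod q)^2 * t * (d * t - 2)"
    proof -
      have c1: "cmod (- cnj q * complex_of_real t) = cmod q * t" using t by (simp add: norm_mult)
      have c2: "Re (cnj 1 * q * (- cnj q * complex_of_real t)) = - ((cmod q)^2 * t)"
        by (simp add: cmod_power2) (simp add: algebra_simps power2_eq_square)
      show ?thesis unfolding Qf_def c1 c2 using True by (simp add: algebra_simps power2_eq_square)
    qed
    finally have "0 \<le> (cmod q)^2 * t * (d * t - 2)" .
    moreover have "d * t < 2" using d0 by (simp add: t_def field_simps)
    ultimately have X: "0 \<le> (cmod q)^2 * t * (d * t - 2)" "d * t < 2" by auto
    have k: "t * (2 - d*t) > 0" using t X(2) by simp
    have e: "(cmod q)^2 * t * (d*t-2) = - ((cmod q)^2 * (t*(2-d*t)))" by (simp add: algebra_simps)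
    have "(cmod q)^2 * (t*(2-d*t)) \<le> 0" using X(1) unfolding e by linarith
    hence "(cmod q)^2 \<le> 0" using k t X(2) by (auto simp: mult_le_0_iff)
    thus ?thesis using True by simp
  qed
  show ?R using r ip ims a0 d0 det by (simp add: a_def d_def)
next
  assume R: ?R
  define a where "a = Re p" define d where "d = Re s"
  have p: "p = complex_of_real a" using R by (simp add: a_def complex_eq_iff)
  have s: "s = complex_of_real d" using R by (simp add: d_def complex_eq_iff)
  have r: "r = cnj q" using R by simp
  have "adj (gm p q r s) = gm p q r s" using R by (simp add: gm_adj gm_eq_iff complex_eq_iff)
  moreover have "Im (\<Sum>i<dim_row (gm p q r s). cnj (v $ i) * (gm p q r s *\<^sub>v v) $ i) = 0 \<and>
        Re (\<Sum>i<dim_row (gm p q r s). cnj (v $ i) * (gm p q r s *\<^sub>v v) $ i) \<ge> 0"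
    if "v \<in> carrier_vec 2" for v
  proof -
    have "(\<Sum>i<dim_row (gm p q r s). cnj (v $ i) * (gm p q r s *\<^sub>v v) $ i) = complex_of_real (Qf a d q (v$0) (v$1))"
      unfolding qf_vec[OF that] p s r by (rule qf_expand)
    moreover have "0 \<le> Qf a d q (v$0) (v$1)" using R by (intro Qf_nonneg) (auto simp: a_def d_def)
    ultimately show ?thesis by (simp only: Re_complex_of_real Im_complex_of_real)
  qed
  ultimately show ?L unfolding psd_def by simp
qed



lemma psd_gm_form: "psd (gm p q r s) \<Longrightarrow> gm p q r s = gm (of_real (Re p)) q (cnj q) (of_real (Re s))"
  by (simp add: psd_gm gm_eq_iff complex_eq_iff)

lemma cnj_q_sq: "q * cnj q = complex_of_real ((cmod q)^2)"
  by (metis complex_norm_square)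

lemma msqrt_gm:
  assumes A: "psd (gm p q r s)"
  defines "a \<equiv> Re p" and "d \<equiv> Re s"
  defines "\<rho> \<equiv> sqrt (a * d - (cmod q)^2)"
  defines "\<tau> \<equiv> a + d + 2 * \<rho>"
  shows "msqrt (gm p q r s) = gm (of_real ((a+\<rho>)/sqrt \<tau>)) (q / of_real (sqrt \<tau>))
            (cnj q / of_real (sqrt \<tau>)) (of_real ((d+\<rho>)/sqrt \<tau>))" (is "_ = ?S0")
    and "psd (gm (of_real ((a+\<rho>)/sqrt \<tau>)) (q / of_real (sqrt \<tau>))
            (cnj q / of_real (sqrt \<tau>)) (of_real ((d+\<rho>)/sqrt \<tau>)))" and "(gm (of_real ((a+\<rho>)/sqrt \<tau>)) (q / of_real (sqrt \<tau>))
            (cnj q / of_real (sqrt \<tau>)) (of_real ((d+\<rho>)/sqrt \<tau>))) * (gm (of_real ((a+\<rho>)/sqrt \<tau>)) (q / of_real (sqrt \<tau>))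
            (cnj q / of_real (sqrt \<tau>)) (of_real ((d+\<rho>)/sqrt \<tau>))) = gm p q r s"
proof -
  have c: "r = cnj q" "Im p = 0" "Im s = 0" "0 \<le> a" "0 \<le> d" "(cmod q)^2 \<le> a * d"
    using A by (simp_all add: psd_gm a_def d_def)
  have Aeq: "gm p q r s = gm (of_real a) q (cnj q) (of_real d)"
    using psd_gm_form[OF A] by (simp add: a_def d_def)
  have \<rho>0: "0 \<le> \<rho>" using c by (simp add: \<rho>_def)
  have \<rho>2: "\<rho>^2 = a * d - (cmod q)^2" using c by (simp add: \<rho>_def)
  have \<tau>0: "0 \<le> \<tau>" using c \<rho>0 by (simp add: \<tau>_def)
  have st2: "sqrt \<tau> ^ 2 = \<tau>" using \<tau>0 by simp
  have psd0: "psd ?S0"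
  proof -
    have "(cmod (q / complex_of_real (sqrt \<tau>)))^2 = (cmod q)^2 / \<tau>"
      using \<tau>0 by (simp add: norm_divide power_divide)
    also have "\<dots> \<le> ((a+\<rho>) * (d+\<rho>)) / \<tau>"
    proof (intro divide_right_mono)
      have "0 \<le> \<rho>*\<rho> + \<rho>*a + \<rho>*d" using c \<rho>0 by simp
      thus "(cmod q)^2 \<le> (a+\<rho>) * (d+\<rho>)" using c by (simp add: algebra_simps)
    qed (use \<tau>0 in simp)
    also have "\<dots> = ((a+\<rho>)/sqrt \<tau>) * ((d+\<rho>)/sqrt \<tau>)"
      using st2 by (simp add: power2_eq_square)
    finally show ?thesis using c \<rho>0 \<tau>0 by (simp add: psd_gm)
  qed
  have sq0: "?S0 * ?S0 = gm p q r s"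
  proof (cases "\<tau> = 0")
    case True
    hence "a + d + 2*\<rho> = 0" by (simp add: \<tau>_def)
    hence "a = 0" "d = 0" "\<rho> = 0" using c \<rho>0 by linarith+
    hence "q = 0" using c by simp
    thus ?thesis using True \<open>a = 0\<close> \<open>d = 0\<close> Aeq by (simp add: gm_mult)
  next
    case False
    hence tp: "\<tau> > 0" using \<tau>0 by simp
    have st: "sqrt \<tau> * sqrt \<tau> = \<tau>" using \<tau>0 by simp
    have stc: "complex_of_real (sqrt \<tau>) * complex_of_real (sqrt \<tau>) = complex_of_real \<tau>"
      using st by (metis of_real_mult)
    have e1: "(a+\<rho>)^2 + (cmod q)^2 = a * \<tau>" using \<rho>2 by (simp add: \<tau>_def power2_eq_square algebra_simps)
    have e2: "(d+\<rho>)^2 + (cmod q)^2 = d * \<tau>" using \<rho>2 by (simp add: \<tau>_def power2_eq_square algebra_simps)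
    have "complex_of_real ((a+\<rho>)/sqrt \<tau>) * complex_of_real ((a+\<rho>)/sqrt \<tau>) + q / complex_of_real (sqrt \<tau>) * (cnj q / complex_of_real (sqrt \<tau>))
        = complex_of_real (((a+\<rho>)^2 + (cmod q)^2) / \<tau>)"
      using tp st stc by (simp add: field_simps cnj_q_sq power2_eq_square)
    moreover have "cnj q / complex_of_real (sqrt \<tau>) * (q / complex_of_real (sqrt \<tau>)) + complex_of_real ((d+\<rho>)/sqrt \<tau>) * complex_of_real ((d+\<rho>)/sqrt \<tau>)
        = complex_of_real (((d+\<rho>)^2 + (cmod q)^2) / \<tau>)"
      using tp st stc by (simp add: field_simps cnj_q_sq power2_eq_square mult.commute)
    moreover have "complex_of_real ((a+\<rho>)/sqrt \<tau>) * (q / complex_of_real (sqrt \<tau>)) + q / complex_of_real (sqrt \<tau>) * complex_of_real ((d+\<rho>)/sqrt \<tau>)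
        = q * complex_of_real ((a + d + 2 * \<rho>) / \<tau>)"
      using tp st stc by (simp add: field_simps)
    moreover have "cnj q / complex_of_real (sqrt \<tau>) * complex_of_real ((a+\<rho>)/sqrt \<tau>) + complex_of_real ((d+\<rho>)/sqrt \<tau>) * (cnj q / complex_of_real (sqrt \<tau>))
        = cnj q * complex_of_real ((a + d + 2 * \<rho>) / \<tau>)"
      using tp st stc by (simp add: field_simps)
    ultimately show ?thesis using e1 e2 tp Aeq unfolding gm_mult gm_eq_iff
      by (simp only:) (simp add: \<tau>_def[symmetric])
  qed
  have uniq: "S = ?S0" if S: "psd S" "dim_row S = dim_row (gm p q r s)" "S * S = gm p q r s" for S
  proof -
    have "S \<in> carrier_mat 2 2" using S unfolding psd_def by simp
    hence S1: "S = gm (S$$(0,0)) (S$$(0,1)) (S$$(1,0)) (S$$(1,1))" by (rule mat2_gm)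
    define P where "P = Re (S$$(0,0))"
    define R where "R = Re (S$$(1,1))"
    define w where "w = S$$(0,1)"
    have pS: "psd (gm (S$$(0,0)) (S$$(0,1)) (S$$(1,0)) (S$$(1,1)))" using S(1) S1 by simp
    have S2: "S = gm (of_real P) w (cnj w) (of_real R)"
      using S1 psd_gm_form[OF pS] by (simp add: P_def R_def w_def)
    have cS: "0 \<le> P" "0 \<le> R" "(cmod w)^2 \<le> P * R"
      using pS by (simp_all add: psd_gm P_def R_def w_def)
    have "gm (of_real P) w (cnj w) (of_real R) * gm (of_real P) w (cnj w) (of_real R) = gm (of_real a) q (cnj q) (of_real d)"
      using S(3) S2 Aeq by simp
    hence "complex_of_real P * complex_of_real P + w * cnj w = complex_of_real a"
        "complex_of_real P * w + w * complex_of_real R = q"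
        "cnj w * w + complex_of_real R * complex_of_real R = complex_of_real d"
      unfolding gm_mult gm_eq_iff by auto
    note E = this
    have ea: "a = P^2 + (cmod w)^2" and ed: "d = R^2 + (cmod w)^2"
      using E(1,3) by (simp_all add: cnj_q_sq mult.commute[of "cnj w"] power2_eq_square algebra_simps flip: of_real_mult of_real_add)
    have eq: "q = w * complex_of_real (P + R)"
      using E(2) by (simp add: distrib_left mult.commute)
    have cq: "(cmod q)^2 = (cmod w)^2 * (P+R)^2"
    proof -
      have "cmod (complex_of_real (P+R)) = P + R" using cS by (simp del: of_real_add)
      thus ?thesis unfolding eq norm_mult power_mult_distrib by simp
    qed
    have "a * d - (cmod q)^2 = (P * R - (cmod w)^2)^2"
      unfolding ea ed cq by (simp add: power2_eq_square algebra_simps)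
    hence r: "\<rho> = P * R - (cmod w)^2" using cS by (simp add: \<rho>_def)
    have sq: "(P+R)^2 = P^2 + R^2 + 2*(P*R)" by (simp add: power2_eq_square algebra_simps)
    have t: "\<tau> = (P + R)^2" unfolding \<tau>_def using ea ed r sq by linarith
    have st: "sqrt \<tau> = P + R" unfolding t by (rule real_sqrt_unique) (use cS in auto)
    show ?thesis
    proof (cases "P + R = 0")
      case True
      hence "P = 0" "R = 0" using cS by auto
      hence "w = 0" using cS by simp
      thus ?thesis using S2 \<open>P = 0\<close> \<open>R = 0\<close> st by simp
    next
      case False
      hence pos: "P + R > 0" using cS by simp
      have f1: "(a + \<rho>) / sqrt \<tau> = P" unfolding st r ea using pos
        by (simp add: field_simps power2_eq_square)
      have f2: "(d + \<rho>) / sqrt \<tau> = R" unfolding st r ed using pos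
        by (simp add: field_simps power2_eq_square)
      have f3: "q / complex_of_real (sqrt \<tau>) = w" unfolding st eq using pos
        by (simp add: field_simps flip: of_real_add)
      have f4: "cnj q / complex_of_real (sqrt \<tau>) = cnj w"
        unfolding f3[symmetric] by simp
      show ?thesis unfolding S2 gm_eq_iff f1 f2 f3 f4 by simp
    qed
  qed
  show "psd ?S0" by (fact psd0)
  show "?S0 * ?S0 = gm p q r s" by (fact sq0)
  show "msqrt (gm p q r s) = ?S0" unfolding msqrt_def
  proof (rule the_equality)
    show "psd ?S0 \<and> dim_row ?S0 = dim_row (gm p q r s) \<and> ?S0 * ?S0 = gm p q r s" using psd0 sq0 by simp
    fix S assume "psd S \<and> dim_row S = dim_row (gm p q r s) \<and> S * S = gm p q r s"
    thus "S = ?S0" using uniq by blast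
  qed
qed



lemma msqrt_props: assumes "psd (gm p q r s)"
  obtains x y z where "msqrt (gm p q r s) = gm (of_real x) y (cnj y) (of_real z)"
    "0 \<le> x" "0 \<le> z" "(cmod y)^2 \<le> x * z"
    "gm (of_real x) y (cnj y) (of_real z) * gm (of_real x) y (cnj y) (of_real z) = gm p q r s"
proof -
  let ?S = "msqrt (gm p q r s)"
  have S: "psd ?S" "?S * ?S = gm p q r s" using msqrt_gm(1,2,3)[OF assms] by simp_all
  have "?S \<in> carrier_mat 2 2" using msqrt_gm(1)[OF assms] by simp
  hence e: "?S = gm (?S$$(0,0)) (?S$$(0,1)) (?S$$(1,0)) (?S$$(1,1))" by (rule mat2_gm)
  hence p: "psd (gm (?S$$(0,0)) (?S$$(0,1)) (?S$$(1,0)) (?S$$(1,1)))" using S by simp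
  show ?thesis
    apply (rule that[of "Re (?S$$(0,0))" "?S$$(0,1)" "Re (?S$$(1,1))"])
    using p psd_gm_form[OF p] e S by (simp_all add: psd_gm)
qed

definition detc :: "complex \<Rightarrow> complex \<Rightarrow> complex \<Rightarrow> complex \<Rightarrow> complex" where
  "detc p q r s = p * s - q * r"

lemma fidelity_gm:
  assumes A: "psd (gm p q r s)" and B: "psd (gm p' q' r' s')"
  shows "fidelity (gm p q r s) (gm p' q' r' s') =
    sqrt (Re (p*p' + q*r' + r*q' + s*s') + 2 * sqrt ((Re p * Re s - (cmod q)^2) * (Re p' * Re s' - (cmod q')^2)))"
proof -
  obtain x y z where S: "msqrt (gm p q r s) = gm (of_real x) y (cnj y) (of_real z)"
    "0 \<le> x" "0 \<le> z" "(cmod y)^2 \<le> x * z"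
    and SS: "gm (of_real x) y (cnj y) (of_real z) * gm (of_real x) y (cnj y) (of_real z) = gm p q r s"
    using msqrt_props[OF A] by blast
  define b1 where "b1 = Re p'" define b2 where "b2 = Re s'"
  have Bf: "gm p' q' r' s' = gm (of_real b1) q' (cnj q') (of_real b2)"
    using psd_gm_form[OF B] by (simp add: b1_def b2_def)
  have Bc: "0 \<le> b1" "0 \<le> b2" "(cmod q')^2 \<le> b1 * b2" using B by (simp_all add: psd_gm b1_def b2_def)
  define X where "X = complex_of_real x" define Z where "Z = complex_of_real z"
  define B1 where "B1 = complex_of_real b1" define B2 where "B2 = complex_of_real b2"
  define m00 where "m00 = (X * B1 + y * cnj q') * X + (X * q' + y * B2) * cnj y"
  define m01 where "m01 = (X * B1 + y * cnj q') * y + (X * q' + y * B2) * Z"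
  define m10 where "m10 = (cnj y * B1 + Z * cnj q') * X + (cnj y * q' + Z * B2) * cnj y"
  define m11 where "m11 = (cnj y * B1 + Z * cnj q') * y + (cnj y * q' + Z * B2) * Z"
  have M: "msqrt (gm p q r s) * gm p' q' r' s' * msqrt (gm p q r s) = gm m00 m01 m10 m11"
    unfolding S Bf gm_mult m00_def m01_def m10_def m11_def X_def Z_def B1_def B2_def by simp
  have h10: "m10 = cnj m01" unfolding m10_def m01_def X_def Z_def B1_def B2_def
    by (simp add: algebra_simps)
  have q00: "m00 = complex_of_real (Qf b1 b2 q' x (cnj y))"
    unfolding qf_expand[symmetric] m00_def X_def B1_def B2_def by (simp add: algebra_simps)
  have q11: "m11 = complex_of_real (Qf b1 b2 q' y z)"
    unfolding qf_expand[symmetric] m11_def Z_def B1_def B2_def by (simp add: algebra_simps)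
  have detS: "detc X y (cnj y) Z = complex_of_real (x * z - (cmod y)^2)"
    unfolding detc_def X_def Z_def by (simp add: cnj_q_sq)
  have detB: "detc B1 q' (cnj q') B2 = complex_of_real (b1 * b2 - (cmod q')^2)"
    unfolding detc_def B1_def B2_def by (simp add: cnj_q_sq)
  have detM: "detc m00 m01 m10 m11 = detc X y (cnj y) Z ^ 2 * detc B1 q' (cnj q') B2"
    unfolding detc_def m00_def m01_def m10_def m11_def by (simp add: algebra_simps power2_eq_square)
  define D where "D = (x * z - (cmod y)^2)^2 * (b1 * b2 - (cmod q')^2)"
  have D0: "0 \<le> D" using Bc by (simp add: D_def)
  have detM': "Re (m00) * Re m11 - (cmod m01)^2 = D"
  proof -
    have "detc m00 m01 m10 m11 = complex_of_real D"
      unfolding detM detS detB D_def by simp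
    hence "m00 * m11 - m01 * cnj m01 = complex_of_real D"
      unfolding detc_def h10 .
    thus ?thesis unfolding q00 q11 cnj_q_sq
      by (simp only: of_real_power[symmetric] of_real_mult[symmetric] of_real_diff[symmetric] of_real_eq_iff Re_complex_of_real)
  qed
  have psdM: "psd (gm m00 m01 m10 m11)"
    unfolding psd_gm using h10 q00 q11 Qf_nonneg[OF Bc] detM' D0 by simp
  have tr: "Re m00 + Re m11 = Re (p*p' + q*r' + r*q' + s*s')"
  proof -
    have "gm p q r s = gm (X*X + y * cnj y) (X*y + y*Z) (cnj y*X + Z*cnj y) (cnj y*y + Z*Z)"
      using SS unfolding gm_mult X_def Z_def by simp
    hence e: "p = X*X + y * cnj y" "q = X*y + y*Z" "r = cnj y*X + Z*cnj y" "s = cnj y*y + Z*Z"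
      unfolding gm_eq_iff by auto
    have "m00 + m11 = p*p' + q*r' + r*q' + s*s'"
      using Bf unfolding e gm_eq_iff m00_def m11_def B1_def B2_def by (simp add: algebra_simps)
    thus ?thesis by (metis plus_complex.sel(1))
  qed
  have detA: "Re p * Re s - (cmod q)^2 = (x * z - (cmod y)^2)^2"
  proof -
    have "gm p q r s = gm (X*X + y * cnj y) (X*y + y*Z) (cnj y*X + Z*cnj y) (cnj y*y + Z*Z)"
      using SS unfolding gm_mult X_def Z_def by simp
    hence e: "p = X*X + y * cnj y" "q = X*y + y*Z" "r = cnj y*X + Z*cnj y" "s = cnj y*y + Z*Z"
      unfolding gm_eq_iff by auto
    have "detc p q r s = detc X y (cnj y) Z ^ 2"
      unfolding e detc_def by (simp add: algebra_simps power2_eq_square)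
    hence "detc p q r s = complex_of_real ((x * z - (cmod y)^2)^2)"
      unfolding detS by simp
    hence "p * s - q * cnj q = complex_of_real ((x * z - (cmod y)^2)^2)"
      unfolding detc_def using A by (simp add: psd_gm)
    moreover have "p = complex_of_real (Re p)" "s = complex_of_real (Re s)"
      using A by (simp_all add: psd_gm complex_eq_iff)
    ultimately show ?thesis unfolding cnj_q_sq
      by (metis Re_complex_of_real of_real_diff of_real_mult)
  qed
  have "fidelity (gm p q r s) (gm p' q' r' s') = Re (mtrace (msqrt (gm m00 m01 m10 m11)))"
    unfolding fidelity_def M ..
  also have "\<dots> = sqrt (Re m00 + Re m11 + 2 * sqrt D)"
  proof -
    define \<rho> where "\<rho> = sqrt (Re m00 * Re m11 - (cmod m01)^2)"
    define \<tau> where "\<tau> = Re m00 + Re m11 + 2 * \<rho>"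
    have \<tau>0: "0 \<le> \<tau>" using psdM by (simp add: psd_gm \<tau>_def \<rho>_def)
    have "Re (mtrace (msqrt (gm m00 m01 m10 m11))) = (Re m00 + \<rho>) / sqrt \<tau> + (Re m11 + \<rho>) / sqrt \<tau>"
      unfolding msqrt_gm(1)[OF psdM] gm_trace \<rho>_def \<tau>_def by simp
    also have "\<dots> = \<tau> / sqrt \<tau>" by (simp add: \<tau>_def add_divide_distrib[symmetric])
    also have "\<dots> = sqrt \<tau>" using \<tau>0 by (metis real_div_sqrt)
    finally show ?thesis unfolding \<tau>_def \<rho>_def detM' .
  qed
  also have "\<dots> = sqrt (Re (p*p' + q*r' + r*q' + s*s') + 2 * sqrt ((Re p * Re s - (cmod q)^2) * (Re p' * Re s' - (cmod q')^2)))"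
    unfolding tr detA D_def b1_def b2_def ..
  finally show ?thesis .
qed



lemma v2_dim[simp]: "dim_vec (v2 x y) = 2" by (simp add: v2_def)

lemma pauli_gm: "pauli 0 = gm 0 1 1 0" "pauli 1 = gm 0 (-\<i>) \<i> 0" "pauli 2 = gm 1 0 0 (-1)"
  by (rule eq_matI; auto simp: pauli_def mat_of_rows_list_def gm_def less2)+

definition Pv :: "nat \<Rightarrow> nat \<Rightarrow> complex vec \<Rightarrow> bool" where
  "Pv a x v \<longleftrightarrow> v \<in> carrier_vec 2 \<and> (\<Sum>i<2. cmod (v $ i) ^ 2) = 1 \<and> pauli x *\<^sub>v v = ((-1) ^ a) \<cdot>\<^sub>v v"

lemma outer_gm: "v \<in> carrier_vec 2 \<Longrightarrow> mat 2 2 (\<lambda>(i,j). v $ i * cnj (v $ j)) =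
   gm (v$0 * cnj (v$0)) (v$0 * cnj (v$1)) (v$1 * cnj (v$0)) (v$1 * cnj (v$1))"
  by (rule eq_matI) (auto simp: gm_def less2)

lemma proj_eq: assumes "Pv a x w" and "\<And>v. Pv a x v \<Longrightarrow> mat 2 2 (\<lambda>(i,j). v $ i * cnj (v $ j)) = G"
  shows "proj a x = G"
proof -
  have "Pv a x (SOME v. Pv a x v)" using assms(1) by (rule someI)
  hence "mat 2 2 (\<lambda>(i,j). (SOME v. Pv a x v) $ i * cnj ((SOME v. Pv a x v) $ j)) = G" by (rule assms(2))
  thus ?thesis unfolding proj_def Pv_def[symmetric] Let_def .
qed

lemma Pv_D: assumes "Pv a x v" "pauli x = gm p q r s"
  shows "v \<in> carrier_vec 2" "(cmod (v$0))^2 + (cmod (v$1))^2 = 1"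
    "p * v$0 + q * v$1 = (-1)^a * v$0" "r * v$0 + s * v$1 = (-1)^a * v$1"
proof -
  have c: "v \<in> carrier_vec 2" using assms by (simp add: Pv_def)
  have e: "pauli x *\<^sub>v v = ((-1) ^ a) \<cdot>\<^sub>v v" using assms by (simp add: Pv_def)
  show "v \<in> carrier_vec 2" by (fact c)
  show "(cmod (v$0))^2 + (cmod (v$1))^2 = 1" using assms by (simp add: Pv_def sum2)
  have "(pauli x *\<^sub>v v) $ 0 = ((-1) ^ a \<cdot>\<^sub>v v) $ 0" using e by simp
  thus "p * v$0 + q * v$1 = (-1)^a * v$0" using c unfolding assms(2) gm_mult_vec[OF c] by simp
  have "(pauli x *\<^sub>v v) $ 1 = ((-1) ^ a \<cdot>\<^sub>v v) $ 1" using e by simp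
  thus "r * v$0 + s * v$1 = (-1)^a * v$1" using c unfolding assms(2) gm_mult_vec[OF c] by simp
qed

lemma Pv_I: assumes "pauli x = gm p q r s" "(cmod x0)^2 + (cmod x1)^2 = 1"
    "p * x0 + q * x1 = (-1)^a * x0" "r * x0 + s * x1 = (-1)^a * x1"
  shows "Pv a x (v2 x0 x1)"
proof -
  have "pauli x *\<^sub>v v2 x0 x1 = ((-1) ^ a) \<cdot>\<^sub>v v2 x0 x1"
  proof (rule eq_vecI)
    fix i assume "i < dim_vec ((-1) ^ a \<cdot>\<^sub>v v2 x0 x1)"
    hence "i = 0 \<or> i = 1" by (auto simp: v2_def)
    thus "(pauli x *\<^sub>v v2 x0 x1) $ i = ((-1) ^ a \<cdot>\<^sub>v v2 x0 x1) $ i"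
      using assms gm_mult_vec[OF v2(1)] by auto
  qed (simp add: assms(1))
  thus ?thesis using assms by (simp add: Pv_def sum2)
qed

definition hs :: complex where "hs = complex_of_real (sqrt 2 / 2)"
lemma hs: "(cmod hs)^2 = 1/2" "hs * hs = 1/2" "cmod (\<i> * hs) ^2 = 1/2" "cnj hs = hs"
  by (simp_all add: hs_def power_divide norm_mult flip: of_real_mult)

lemma cnj_sq': "cnj q * q = complex_of_real ((cmod q)^2)"
  by (metis cnj_q_sq mult.commute)

lemma cprod: "(c*u)*cnj(c*u) = (c*cnj c)*(u*cnj u)" "(c*u)*cnj u = c*(u*cnj u)" "u*cnj(c*u) = cnj c*(u*cnj u)"
  "u*cnj(-u) = -(u*cnj u)" "(-u)*cnj u = -(u*cnj u)" "(-u)*cnj(-u) = u*cnj u"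
  for c u :: complex by (simp_all add: algebra_simps)

lemma proj00: "proj 0 0 = gm (1/2) (1/2) (1/2) (1/2)"
proof (rule proj_eq)
  show "Pv 0 0 (v2 hs hs)" by (rule Pv_I[OF pauli_gm(1)]) (auto simp: hs)
  fix v assume "Pv 0 0 v"
  note D = Pv_D[OF this pauli_gm(1)]
  have e: "v$1 = v$0" using D(3) by simp
  have n: "(cmod (v$0))^2 = 1/2" using D(2) unfolding e by simp
  show "mat 2 2 (\<lambda>(i,j). v $ i * cnj (v $ j)) = gm (1/2) (1/2) (1/2) (1/2)"
    unfolding outer_gm[OF D(1)] e cnj_q_sq n by simp
qed

lemma proj10: "proj 1 0 = gm (1/2) (-1/2) (-1/2) (1/2)"
proof (rule proj_eq)
  show "Pv 1 0 (v2 hs (-hs))" by (rule Pv_I[OF pauli_gm(1)]) (auto simp: hs)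
  fix v assume "Pv 1 0 v"
  note D = Pv_D[OF this pauli_gm(1)]
  have e: "v$1 = - v$0" using D(3) by simp
  have n: "(cmod (v$0))^2 = 1/2" using D(2) unfolding e by simp
  show "mat 2 2 (\<lambda>(i,j). v $ i * cnj (v $ j)) = gm (1/2) (-1/2) (-1/2) (1/2)"
    unfolding outer_gm[OF D(1)] e unfolding cprod unfolding cnj_q_sq n by simp
qed

lemma proj01: "proj 0 1 = gm (1/2) (-\<i>/2) (\<i>/2) (1/2)"
proof (rule proj_eq)
  show "Pv 0 1 (v2 hs (\<i> * hs))" by (rule Pv_I[OF pauli_gm(2)]) (auto simp: hs)
  fix v assume "Pv 0 1 v"
  note D = Pv_D[OF this pauli_gm(2)]
  have e: "v$0 = - \<i> * v$1" using D(3) by simp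
  have n: "(cmod (v$1))^2 = 1/2" using D(2) unfolding e by (simp add: norm_mult)
  show "mat 2 2 (\<lambda>(i,j). v $ i * cnj (v $ j)) = gm (1/2) (-\<i>/2) (\<i>/2) (1/2)"
    unfolding outer_gm[OF D(1)] e unfolding cprod unfolding cnj_q_sq n
    by (simp add: gm_eq_iff)
qed

lemma proj11: "proj 1 1 = gm (1/2) (\<i>/2) (-\<i>/2) (1/2)"
proof (rule proj_eq)
  show "Pv 1 1 (v2 hs (- \<i> * hs))" by (rule Pv_I[OF pauli_gm(2)]) (auto simp: hs)
  fix v assume "Pv 1 1 v"
  note D = Pv_D[OF this pauli_gm(2)]
  have e: "v$0 = \<i> * v$1" using D(3) by simp
  have n: "(cmod (v$1))^2 = 1/2" using D(2) unfolding e by (simp add: norm_mult)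
  show "mat 2 2 (\<lambda>(i,j). v $ i * cnj (v $ j)) = gm (1/2) (\<i>/2) (-\<i>/2) (1/2)"
    unfolding outer_gm[OF D(1)] e unfolding cprod unfolding cnj_q_sq n
    by (simp add: gm_eq_iff)
qed

lemma proj02: "proj 0 2 = gm 1 0 0 0"
proof (rule proj_eq)
  show "Pv 0 2 (v2 1 0)" by (rule Pv_I[OF pauli_gm(3)]) auto
  fix v assume "Pv 0 2 v"
  note D = Pv_D[OF this pauli_gm(3)]
  have e: "v$1 = 0" using D(4) by simp
  have n: "(cmod (v$0))^2 = 1" using D(2) unfolding e by simp
  show "mat 2 2 (\<lambda>(i,j). v $ i * cnj (v $ j)) = gm 1 0 0 0"
    unfolding outer_gm[OF D(1)] e cnj_q_sq n by simp
qed

lemma proj12: "proj 1 2 = gm 0 0 0 1"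
proof (rule proj_eq)
  show "Pv 1 2 (v2 0 1)" by (rule Pv_I[OF pauli_gm(3)]) auto
  fix v assume "Pv 1 2 v"
  note D = Pv_D[OF this pauli_gm(3)]
  have e: "v$0 = 0" using D(3) by simp
  have n: "(cmod (v$1))^2 = 1" using D(2) unfolding e by simp
  show "mat 2 2 (\<lambda>(i,j). v $ i * cnj (v $ j)) = gm 0 0 0 1"
    unfolding outer_gm[OF D(1)] e cnj_q_sq n by simp
qed



lemma asm_gen:
  assumes "\<And>i j k. \<psi> i j k = (if i = 0 \<and> j = 0 \<and> k = 0 then \<alpha>0 else if i = 1 \<and> j = 1 \<and> k = 1 then \<beta>0 else 0)"
  shows "ptrace_AB (mult3 (tensor3 (gm p00 p01 p10 p11) (gm q00 q01 q10 q11) (1\<^sub>m 2)) (dens3 \<psi>))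
    = gm (p00*q00*\<alpha>0*cnj \<alpha>0) (p10*q10*\<alpha>0*cnj \<beta>0) (p01*q01*\<beta>0*cnj \<alpha>0) (p11*q11*\<beta>0*cnj \<beta>0)"
  by (rule eq_matI) (auto simp: ptrace_AB_def mult3_def tensor3_def dens3_def assms sum2 less2)

lemma ket_ghz_alt: "ket_ghz i j k = (if i = 0 \<and> j = 0 \<and> k = 0 then complex_of_real (1 / sqrt 2)
   else if i = 1 \<and> j = 1 \<and> k = 1 then complex_of_real (1 / sqrt 2) else 0)"
  by (auto simp: ket_ghz_def)

definition d0 :: "nat \<Rightarrow> nat \<Rightarrow> real" where "d0 a x = (if x = 2 then (if a = 0 then 1 else 0) else 1/2)"
definition d1 :: "nat \<Rightarrow> nat \<Rightarrow> real" where "d1 a x = (if x = 2 then (if a = 0 then 0 else 1) else 1/2)"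
definition pq :: "nat \<Rightarrow> nat \<Rightarrow> complex" where
  "pq a x = (if x = 0 then (if a = 0 then 1/2 else -1/2) else if x = 1 then (if a = 0 then -\<i>/2 else \<i>/2) else 0)"

lemma proj_suc: "proj (Suc 0) 0 = gm (1/2) (-1/2) (-1/2) (1/2)" "proj 0 (Suc 0) = gm (1/2) (-\<i>/2) (\<i>/2) (1/2)"
  "proj (Suc 0) (Suc 0) = gm (1/2) (\<i>/2) (-\<i>/2) (1/2)" "proj (Suc 0) 2 = gm 0 0 0 1"
  by (simp_all only: One_nat_def[symmetric] proj10 proj01 proj11 proj12)

lemma proj_tab: assumes "a < 2" "x < 3"
  shows "proj a x = gm (of_real (d0 a x)) (pq a x) (cnj (pq a x)) (of_real (d1 a x))"
proof -
  have "a = 0 \<or> a = 1" "x = 0 \<or> x = 1 \<or> x = 2" using assms by auto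
  thus ?thesis
    by (auto simp: d0_def d1_def pq_def proj00 proj10 proj01 proj11 proj02 proj12 proj_suc gm_eq_iff)
qed

lemma pq_norm: assumes "a < 2" "x < 3" shows "(cmod (pq a x))^2 = d0 a x * d1 a x"
proof -
  have "a = 0 \<or> a = 1" "x = 0 \<or> x = 1 \<or> x = 2" using assms by auto
  thus ?thesis by (auto simp: d0_def d1_def pq_def norm_divide power_divide)
qed

lemma d_nonneg: "0 \<le> d0 a x" "0 \<le> d1 a x" by (auto simp: d0_def d1_def)

definition Fv :: "real \<Rightarrow> real \<Rightarrow> real \<Rightarrow> real \<Rightarrow> real \<Rightarrow> real" where
  "Fv \<alpha> \<beta> \<gamma> U0 U1 = (if U0 + U1 = 0 then 0 else sqrt ((U0^2 * \<alpha> + U1^2 * \<beta>)/2 + U0 * U1 * \<gamma>))"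

lemma fid_generic:
  assumes U: "0 \<le> U0" "0 \<le> U1" "(cmod w)^2 = U0 * U1"
    and P: "0 < \<alpha>" "0 < \<beta>" "0 \<le> \<gamma>" "\<gamma>^2 \<le> \<alpha> * \<beta>"
  shows "comp_fid (gm (of_real (U0 * \<alpha>)) (w * of_real \<gamma>) (cnj w * of_real \<gamma>) (of_real (U1 * \<beta>)))
                  (gm (of_real (U0/2)) (w/2) (cnj w/2) (of_real (U1/2))) = Fv \<alpha> \<beta> \<gamma> U0 U1"
proof (cases "U0 + U1 = 0")
  case True
  hence "U0 = 0" "U1 = 0" using U by auto
  thus ?thesis by (simp add: comp_fid_def gm_trace Fv_def)
next
  case False
  have t1: "mtrace (gm (of_real (U0 * \<alpha>)) (w * of_real \<gamma>) (cnj w * of_real \<gamma>) (of_real (U1 * \<beta>))) \<noteq> 0"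
  proof
    assume "mtrace (gm (of_real (U0 * \<alpha>)) (w * of_real \<gamma>) (cnj w * of_real \<gamma>) (of_real (U1 * \<beta>))) = 0"
    hence "U0 * \<alpha> + U1 * \<beta> = 0" unfolding gm_trace of_real_add[symmetric] of_real_eq_0_iff .
    moreover have "0 \<le> U0 * \<alpha>" "0 \<le> U1 * \<beta>" using U P by auto
    ultimately have "U0 * \<alpha> = 0" "U1 * \<beta> = 0" by linarith+
    thus False using P False by simp
  qed
  have t2: "mtrace (gm (of_real (U0/2)) (w/2) (cnj w/2) (of_real (U1/2))) \<noteq> 0"
    using False U unfolding gm_trace of_real_add[symmetric] of_real_eq_0_iff by simp
  have pA: "psd (gm (of_real (U0 * \<alpha>)) (w * of_real \<gamma>) (cnj w * of_real \<gamma>) (of_real (U1 * \<beta>)))"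
  proof -
    have "(cmod (w * of_real \<gamma>))^2 = U0 * U1 * \<gamma>^2" using U P by (simp add: norm_mult power_mult_distrib)
    also have "\<dots> \<le> U0 * U1 * (\<alpha> * \<beta>)" using U P by (intro mult_left_mono) auto
    finally show ?thesis using U P by (simp add: psd_gm algebra_simps)
  qed
  have pB: "psd (gm (of_real (U0/2)) (w/2) (cnj w/2) (of_real (U1/2)))"
    using U by (simp add: psd_gm norm_divide power_divide)
  have detB: "Re (complex_of_real (U0/2)) * Re (complex_of_real (U1/2)) - (cmod (w/2))^2 = 0"
    using U by (simp add: norm_divide power_divide)
  have tr: "Re (of_real (U0 * \<alpha>) * of_real (U0/2) + w * of_real \<gamma> * (cnj w/2) + cnj w * of_real \<gamma> * (w/2) + of_real (U1 * \<beta>) * of_real (U1/2))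
     = (U0^2 * \<alpha> + U1^2 * \<beta>)/2 + U0 * U1 * \<gamma>"
  proof -
    have "w * of_real \<gamma> * (cnj w/2) + cnj w * of_real \<gamma> * (w/2) = complex_of_real ((cmod w)^2 * \<gamma>)"
      by (simp add: cnj_q_sq field_simps)
    hence "Re (w * of_real \<gamma> * (cnj w/2) + cnj w * of_real \<gamma> * (w/2)) = U0 * U1 * \<gamma>"
      unfolding U(3) by (simp only: Re_complex_of_real)
    thus ?thesis by (simp add: power2_eq_square algebra_simps)
  qed
  have F: "fidelity (gm (of_real (U0 * \<alpha>)) (w * of_real \<gamma>) (cnj w * of_real \<gamma>) (of_real (U1 * \<beta>)))
                  (gm (of_real (U0/2)) (w/2) (cnj w/2) (of_real (U1/2))) = sqrt ((U0^2 * \<alpha> + U1^2 * \<beta>)/2 + U0 * U1 * \<gamma>)"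
    unfolding fidelity_gm[OF pA pB] detB tr by simp
  show ?thesis
    unfolding comp_fid_def F Fv_def using t1 t2 False by simp
qed

lemma Fv_vals: "Fv \<alpha> \<beta> \<gamma> 0 0 = 0" "Fv \<alpha> \<beta> \<gamma> 1 0 = sqrt (\<alpha>/2)" "Fv \<alpha> \<beta> \<gamma> 0 1 = sqrt (\<beta>/2)"
  "Fv \<alpha> \<beta> \<gamma> (1/2) 0 = sqrt (\<alpha>/2) / 2" "Fv \<alpha> \<beta> \<gamma> 0 (1/2) = sqrt (\<beta>/2) / 2"
  "Fv \<alpha> \<beta> \<gamma> (1/4) (1/4) = sqrt ((\<alpha> + \<beta> + 2 * \<gamma>)/2) / 4"
proof -
  have s4: "sqrt 4 = 2" by (simp add: real_sqrt_unique[of 2 4])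
  have s16: "sqrt 16 = 4" by (simp add: real_sqrt_unique[of 4 16])
  show "Fv \<alpha> \<beta> \<gamma> 0 0 = 0" "Fv \<alpha> \<beta> \<gamma> 1 0 = sqrt (\<alpha>/2)" "Fv \<alpha> \<beta> \<gamma> 0 1 = sqrt (\<beta>/2)"
    by (simp_all add: Fv_def)
  have "sqrt (\<alpha>/8) = sqrt ((\<alpha>/2) / 4)" by (rule arg_cong[where f=sqrt]) simp
  also have "\<dots> = sqrt (\<alpha>/2) / 2" by (simp only: real_sqrt_divide s4)
  finally have a8: "sqrt (\<alpha>/8) = sqrt (\<alpha>/2) / 2" .
  moreover have "Fv \<alpha> \<beta> \<gamma> (1/2) 0 = sqrt (\<alpha>/8)"
  proof -
    have e: "((1/2)^2 * \<alpha> + 0^2 * \<beta>)/2 + 1/2 * 0 * \<gamma> = \<alpha>/8" by (simp add: power2_eq_square)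
    have n: "1/2 + 0 \<noteq> (0::real)" by simp
    show ?thesis unfolding Fv_def e by (simp only: n if_False)
  qed
  ultimately show "Fv \<alpha> \<beta> \<gamma> (1/2) 0 = sqrt (\<alpha>/2) / 2" by (simp only:)
  have "sqrt (\<beta>/8) = sqrt ((\<beta>/2) / 4)" by (rule arg_cong[where f=sqrt]) simp
  also have "\<dots> = sqrt (\<beta>/2) / 2" by (simp only: real_sqrt_divide s4)
  finally have b8: "sqrt (\<beta>/8) = sqrt (\<beta>/2) / 2" .
  moreover have "Fv \<alpha> \<beta> \<gamma> 0 (1/2) = sqrt (\<beta>/8)"
  proof -
    have e: "(0^2 * \<alpha> + (1/2)^2 * \<beta>)/2 + 0 * (1/2) * \<gamma> = \<beta>/8" by (simp add: power2_eq_square)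
    have n: "0 + 1/2 \<noteq> (0::real)" by simp
    show ?thesis unfolding Fv_def e by (simp only: n if_False)
  qed
  ultimately show "Fv \<alpha> \<beta> \<gamma> 0 (1/2) = sqrt (\<beta>/2) / 2" by (simp only:)
  have "((1/4)^2 * \<alpha> + (1/4)^2 * \<beta>)/2 + 1/4 * (1/4) * \<gamma> = ((\<alpha> + \<beta> + 2 * \<gamma>)/2) / 16"
    by (simp add: power2_eq_square field_simps)
  hence "Fv \<alpha> \<beta> \<gamma> (1/4) (1/4) = sqrt (((\<alpha> + \<beta> + 2 * \<gamma>)/2) / 16)" by (simp add: Fv_def)
  also have "\<dots> = sqrt ((\<alpha> + \<beta> + 2 * \<gamma>)/2) / 4" by (simp only: real_sqrt_divide s16)
  finally show "Fv \<alpha> \<beta> \<gamma> (1/4) (1/4) = sqrt ((\<alpha> + \<beta> + 2 * \<gamma>)/2) / 4" .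
qed



definition al :: "real \<Rightarrow> nat \<Rightarrow> real" where "al \<theta> N = P_success \<theta> N / 2 + P_fail \<theta> N * (cos \<theta>)^2"
definition be :: "real \<Rightarrow> nat \<Rightarrow> real" where "be \<theta> N = P_success \<theta> N / 2 + P_fail \<theta> N * (sin \<theta>)^2"
definition ga :: "real \<Rightarrow> nat \<Rightarrow> real" where "ga \<theta> N = P_success \<theta> N / 2 + P_fail \<theta> N * (cos \<theta> * sin \<theta>)"

lemma ghz_gm: assumes "a < 2" "b < 2" "x < 3" "y < 3"
  shows "assemblage ket_ghz a b x y = gm (of_real (d0 a x * d0 b y / 2)) (cnj (pq a x) * cnj (pq b y) / 2)
     (cnj (cnj (pq a x) * cnj (pq b y)) / 2) (of_real (d1 a x * d1 b y / 2))"
proof -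
  have h: "complex_of_real (1 / sqrt 2) * complex_of_real (1 / sqrt 2) = 1/2"
    by (simp flip: of_real_mult)
  show ?thesis
    unfolding assemblage_def proj_tab[OF assms(1,3)] proj_tab[OF assms(2,4)] asm_gen[OF ket_ghz_alt]
      complex_cnj_complex_of_real unfolding mult.assoc h
    by (simp add: gm_eq_iff)
qed

lemma gghz_gm: assumes "a < 2" "b < 2" "x < 3" "y < 3"
  shows "assemblage (ket_gghz \<theta>) a b x y = gm (of_real (d0 a x * d0 b y * (cos \<theta>)^2)) (cnj (pq a x) * cnj (pq b y) * of_real (cos \<theta> * sin \<theta>))
     (cnj (cnj (pq a x) * cnj (pq b y)) * of_real (cos \<theta> * sin \<theta>)) (of_real (d1 a x * d1 b y * (sin \<theta>)^2))"
proof -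
  have k: "\<And>i j k. ket_gghz \<theta> i j k = (if i = 0 \<and> j = 0 \<and> k = 0 then complex_of_real (cos \<theta>)
       else if i = 1 \<and> j = 1 \<and> k = 1 then complex_of_real (sin \<theta>) else 0)" by (simp add: ket_gghz_def)
  show ?thesis
    unfolding assemblage_def proj_tab[OF assms(1,3)] proj_tab[OF assms(2,4)] asm_gen[OF k]
    by (simp add: gm_eq_iff mult.assoc power2_eq_square)
qed

lemma dist_gm: assumes "a < 2" "b < 2" "x < 3" "y < 3"
  shows "sigma_dist \<theta> N a b x y = gm (of_real (d0 a x * d0 b y * al \<theta> N)) (cnj (pq a x) * cnj (pq b y) * of_real (ga \<theta> N))
     (cnj (cnj (pq a x) * cnj (pq b y)) * of_real (ga \<theta> N)) (of_real (d1 a x * d1 b y * be \<theta> N))"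
  unfolding sigma_dist_def ghz_gm[OF assms] gghz_gm[OF assms] gm_smult gm_add gm_eq_iff
  by (simp add: al_def be_def ga_def algebra_simps)

lemma comp_val: assumes "a < 2" "b < 2" "x < 3" "y < 3"
  and P: "0 < al \<theta> N" "0 < be \<theta> N" "0 \<le> ga \<theta> N" "(ga \<theta> N)^2 \<le> al \<theta> N * be \<theta> N"
  shows "comp_fid (sigma_dist \<theta> N a b x y) (assemblage ket_ghz a b x y)
     = Fv (al \<theta> N) (be \<theta> N) (ga \<theta> N) (d0 a x * d0 b y) (d1 a x * d1 b y)"
proof -
  have w: "(cmod (cnj (pq a x) * cnj (pq b y)))^2 = (d0 a x * d0 b y) * (d1 a x * d1 b y)"
    using pq_norm[OF assms(1,3)] pq_norm[OF assms(2,4)] by (simp add: norm_mult power_mult_distrib)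
  have g: "assemblage ket_ghz a b x y = gm (of_real (d0 a x * d0 b y / 2)) (cnj (pq a x) * cnj (pq b y) / 2)
     (cnj (cnj (pq a x) * cnj (pq b y)) / 2) (of_real (d1 a x * d1 b y / 2))" by (rule ghz_gm[OF assms(1-4)])
  show ?thesis unfolding dist_gm[OF assms(1-4)] g
    by (rule fid_generic) (use w P d_nonneg in auto)
qed



lemma params: assumes "0 < \<theta>" "\<theta> < pi / 4"
  shows "P_fail \<theta> N = cos (2*\<theta>) ^ (N - 1)" "0 \<le> P_fail \<theta> N" "P_fail \<theta> N \<le> 1"
    "0 < al \<theta> N" "0 < be \<theta> N" "0 \<le> ga \<theta> N" "(ga \<theta> N)^2 \<le> al \<theta> N * be \<theta> N"
proof -
  show pf: "P_fail \<theta> N = cos (2*\<theta>) ^ (N - 1)" by (simp add: P_fail_def cos_double_sin)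
  have c2: "0 < cos (2*\<theta>)" using assms by (intro cos_gt_zero_pi) auto
  have c2': "cos (2*\<theta>) \<le> 1" by simp
  show f0: "0 \<le> P_fail \<theta> N" unfolding pf using c2 by simp
  show f1: "P_fail \<theta> N \<le> 1" unfolding pf using c2 c2' by (simp add: power_le_one)
  have c: "0 < cos \<theta>" using assms by (intro cos_gt_zero_pi) auto
  have s: "0 < sin \<theta>" using assms by (intro sin_gt_zero) auto
  have cs: "(cos \<theta>)^2 + (sin \<theta>)^2 = 1" by simp
  define Pf where "Pf = P_fail \<theta> N"
  define C where "C = cos \<theta>" define S where "S = sin \<theta>"
  have Ps: "P_success \<theta> N = 1 - Pf" by (simp add: P_success_def Pf_def)
  have C1: "C^2 \<le> 1" "S^2 \<le> 1" unfolding C_def S_def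
    using cs zero_le_power2[of "sin \<theta>"] zero_le_power2[of "cos \<theta>"] by linarith+
  have "C^2 / 2 \<le> al \<theta> N"
  proof -
    have "(1 - Pf) * C^2 \<le> (1 - Pf) * 1" using f1 C1 by (intro mult_left_mono) (auto simp: Pf_def)
    moreover have "(1-Pf)*C^2 = C^2 - Pf*C^2" by (simp add: algebra_simps)
    moreover have "0 \<le> Pf * C^2" using f0 by (simp add: Pf_def)
    ultimately show ?thesis unfolding al_def Ps C_def[symmetric] Pf_def[symmetric] by linarith
  qed
  moreover have "0 < C^2 / 2" using c by (simp add: C_def)
  ultimately show "0 < al \<theta> N" by linarith
  have "S^2 / 2 \<le> be \<theta> N"
  proof -
    have "(1 - Pf) * S^2 \<le> (1 - Pf) * 1" using f1 C1 by (intro mult_left_mono) (auto simp: Pf_def)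
    moreover have "(1-Pf)*S^2 = S^2 - Pf*S^2" by (simp add: algebra_simps)
    moreover have "0 \<le> Pf * S^2" using f0 by (simp add: Pf_def)
    ultimately show ?thesis unfolding be_def Ps S_def[symmetric] Pf_def[symmetric] by linarith
  qed
  moreover have "0 < S^2 / 2" using s by (simp add: S_def)
  ultimately show "0 < be \<theta> N" by linarith
  show "0 \<le> ga \<theta> N" unfolding ga_def Ps using f0 f1 c s by (simp add: Pf_def)
  have "al \<theta> N * be \<theta> N - (ga \<theta> N)^2 = (1 - Pf) * Pf * (C - S)^2 / 2"
    unfolding al_def be_def ga_def Ps C_def[symmetric] S_def[symmetric] Pf_def[symmetric]
    by (simp add: power2_eq_square field_simps)
  moreover have "0 \<le> (1 - Pf) * Pf * (C - S)^2 / 2" using f0 f1 by (simp add: Pf_def)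
  ultimately show "(ga \<theta> N)^2 \<le> al \<theta> N * be \<theta> N" by linarith
qed

theorem theorem2:
  fixes \<theta> :: real and N :: nat
  assumes "0 < \<theta>" and "\<theta> < pi / 4" and "N \<ge> 2"
  shows "assemblage_fidelity (sigma_dist \<theta> N) (assemblage ket_ghz)
           = sqrt (1 - 1/2 * (1 - sin (2 * \<theta>)) * (cos (2 * \<theta>)) ^ (N - 1))"
proof -
  note P = params[OF assms(1,2), of N]
  define A where "A = al \<theta> N" define B where "B = be \<theta> N" define G where "G = ga \<theta> N"
  define V1 where "V1 = sqrt ((A + B + 2 * G)/2)"
  define V2 where "V2 = sqrt (A/2) + sqrt (B/2)"
  define f where "f = (\<lambda>(x,y). \<Sum>a<2. \<Sum>b<2. comp_fid (sigma_dist \<theta> N a b x y) (assemblage ket_ghz a b x y))"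
  have fv: "f (x,y) = (if x < 2 \<and> y < 2 then V1 else V2)" if "x < 3" "y < 3" for x y
  proof -
    have "f (x,y) = (\<Sum>a<2. \<Sum>b<2. Fv A B G (d0 a x * d0 b y) (d1 a x * d1 b y))"
      unfolding f_def A_def B_def G_def using that P
      by (auto intro!: sum.cong comp_val)
    also have "\<dots> = (if x < 2 \<and> y < 2 then V1 else V2)"
    proof -
      have "x = 0 \<or> x = 1 \<or> x = 2" "y = 0 \<or> y = 1 \<or> y = 2" using that by auto
      thus ?thesis by (elim disjE) (simp_all add: sum2 d0_def d1_def Fv_vals V1_def V2_def)
    qed
    finally show ?thesis .
  qed
  have img: "f ` ({..<3} \<times> {..<3}) = {V1, V2}"
  proof
    show "f ` ({..<3} \<times> {..<3}) \<subseteq> {V1, V2}" using fv by auto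
    have "V1 = f (0,0)" "V2 = f (2,2)" using fv by auto
    thus "{V1, V2} \<subseteq> f ` ({..<3} \<times> {..<3})" by auto
  qed
  have le: "V1 \<le> V2"
  proof -
    have A0: "0 < A" "0 < B" "0 \<le> G" "G^2 \<le> A * B" using P by (simp_all add: A_def B_def G_def)
    have g: "G \<le> sqrt (A * B)" using A0 by (simp add: real_le_rsqrt)
    have "sqrt (A/2) * sqrt (B/2) = sqrt (A * B) / 2"
    proof -
      have "sqrt (A/2) * sqrt (B/2) = sqrt ((A * B) / 4)" by (simp add: real_sqrt_mult[symmetric])
      also have "\<dots> = sqrt (A * B) / 2" by (simp add: real_sqrt_divide real_sqrt_unique[of 2 4])
      finally show ?thesis .
    qed
    hence "V2^2 = A/2 + B/2 + sqrt (A * B)" using A0 unfolding V2_def by (simp add: power2_eq_square algebra_simps)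
    hence "(A + B + 2 * G)/2 \<le> V2^2" using g by simp
    hence "V1 \<le> sqrt (V2^2)" unfolding V1_def by (rule real_sqrt_le_mono)
    also have "\<dots> = V2" using A0 by (simp add: V2_def)
    finally show ?thesis .
  qed
  have "assemblage_fidelity (sigma_dist \<theta> N) (assemblage ket_ghz) = Min {V1, V2}"
    unfolding assemblage_fidelity_def f_def[symmetric] img ..
  also have "\<dots> = V1" using le by simp
  also have "\<dots> = sqrt (1 - 1/2 * (1 - sin (2 * \<theta>)) * (cos (2 * \<theta>)) ^ (N - 1))"
  proof -
    have cs: "(cos \<theta>)^2 + (sin \<theta>)^2 = 1" by simp
    have e: "P_fail \<theta> N * (2 * (cos \<theta>)\<^sup>2) + P_fail \<theta> N * (2 * (sin \<theta>)\<^sup>2) = P_fail \<theta> N * 2"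
    proof -
      have "P_fail \<theta> N * (2 * (cos \<theta>)\<^sup>2) + P_fail \<theta> N * (2 * (sin \<theta>)\<^sup>2)
          = P_fail \<theta> N * 2 * ((cos \<theta>)^2 + (sin \<theta>)^2)" by (simp only: distrib_left mult.assoc)
      thus ?thesis by (simp only: cs mult_1_right)
    qed
    have "(A + B + 2 * G)/2 = 1 - 1/2 * (1 - sin (2 * \<theta>)) * P_fail \<theta> N"
      unfolding A_def B_def G_def al_def be_def ga_def P_success_def sin_double
      using cs by (simp add: algebra_simps) (simp add: field_simps, rule e)
    thus ?thesis unfolding V1_def P(1) by simp
  qed
  finally show ?thesis .
qed

end
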